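(* Let $s,r,R$ be positive integers with $s\ge 2$, let $t=s-R-1$, and assume $\delta=R-rt\le 0$. Let $m\in\mathbb F_q^{s\times r}$ be the matrix whose rows $m_1,\dots,m_{R+1}$ all equal $e_1=(1,0,\dots,0)\in\mathbb F_q^{1\times r}$ and whose rows $m_{R+2},\dots,m_s$ are zero. Let $c\in\mathbb F_q^{s\times r}$ satisfy $c\in B(m,R)$ and $B(c,R)\cap B(R)=\emptyset$. Then $c_i=e_1$ for all $1\le i\le R+1$, and $\sum_{i=R+2}^{s}w(c_i)=R$.
   Context: $q$ is a prime power, $\mathbb F_q^{s\times r}$ the set of $s\times r$ matrices over $\mathbb F_q$ with rows $c_1,\dots,c_s\in\mathbb F_q^{1\times r}$. For a row $y=(y_1,\dots,y_r)$, the NRT weight is $w(y)=\max\{j: y_j\neq 0\}$ if $y\ne0$ and $w(0)=0$; for a matrix, $w(x)=\sum_i w(x_i)$. The NRT metric is $d(x,y)=w(x-y)$; $B(c,R)=\{x: d(x,c)\le R\}$, $B(R)=B(0,R)$. Note $\delta=R-rt$ equals $(r+1)(R+1)-sr-1$. *)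

theory Defs
  imports Main
begin

text \<open>Matrices in F_q^{s x r} are represented as functions nat => nat => 'a
  (row index i in {1..s}, column index j in {1..r}) that vanish outside that range.\<close>

definition mats :: "nat \<Rightarrow> nat \<Rightarrow> (nat \<Rightarrow> nat \<Rightarrow> 'a::zero) set" where
  "mats s r = {x. \<forall>i j. (i \<notin> {1..s} \<or> j \<notin> {1..r}) \<longrightarrow> x i j = 0}"

definition nrt_row_weight :: "nat \<Rightarrow> (nat \<Rightarrow> 'a::zero) \<Rightarrow> nat" where
  "nrt_row_weight r y = (if \<forall>j\<in>{1..r}. y j = 0 then 0 else Max {j\<in>{1..r}. y j \<noteq> 0})"

definition nrt_weight :: "nat \<Rightarrow> nat \<Rightarrow> (nat \<Rightarrow> nat \<Rightarrow> 'a::zero) \<Rightarrow> nat" where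
  "nrt_weight s r x = (\<Sum>i=1..s. nrt_row_weight r (x i))"

definition nrt_dist :: "nat \<Rightarrow> nat \<Rightarrow> (nat \<Rightarrow> nat \<Rightarrow> 'a::ab_group_add) \<Rightarrow> (nat \<Rightarrow> nat \<Rightarrow> 'a) \<Rightarrow> nat" where
  "nrt_dist s r x y = nrt_weight s r (\<lambda>i j. x i j - y i j)"

definition nrt_ball :: "nat \<Rightarrow> nat \<Rightarrow> (nat \<Rightarrow> nat \<Rightarrow> 'a::ab_group_add) \<Rightarrow> nat \<Rightarrow> (nat \<Rightarrow> nat \<Rightarrow> 'a) set" where
  "nrt_ball s r c R = {x \<in> mats s r. nrt_dist s r x c \<le> R}"

definition e1_row :: "nat \<Rightarrow> 'a::{zero,one}" where
  "e1_row j = (if j = 1 then 1 else 0)"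

end

theory Submission
  imports Defs
begin

lemma w_le: "nrt_row_weight r y \<le> k \<longleftrightarrow> (\<forall>j\<in>{1..r}. k < j \<longrightarrow> y j = 0)"
proof (cases "\<forall>j\<in>{1..r}. y j = 0")
  case True then show ?thesis by (simp add: nrt_row_weight_def)
next
  case False
  then have ne: "{j\<in>{1..r}. y j \<noteq> 0} \<noteq> {}" by auto
  have "Max {j\<in>{1..r}. y j \<noteq> 0} \<le> k \<longleftrightarrow> (\<forall>j\<in>{j\<in>{1..r}. y j \<noteq> 0}. j \<le> k)"
    using ne by (simp add: Max_le_iff)
  also have "\<dots> \<longleftrightarrow> (\<forall>j\<in>{1..r}. k < j \<longrightarrow> y j = 0)" using not_less by force
  finally show ?thesis using False by (simp add: nrt_row_weight_def)
qed

lemma w_cong: "(\<And>j. j\<in>{1..r} \<Longrightarrow> (y j = 0 \<longleftrightarrow> z j = 0)) \<Longrightarrow> nrt_row_weight r y = nrt_row_weight r z"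
proof -
  assume h: "\<And>j. j\<in>{1..r} \<Longrightarrow> (y j = 0 \<longleftrightarrow> z j = 0)"
  have "\<And>k. nrt_row_weight r y \<le> k \<longleftrightarrow> nrt_row_weight r z \<le> k"
    using h by (simp add: w_le)
  then show ?thesis by (meson le_antisym le_refl)
qed

lemma w_ultra: "nrt_row_weight r (\<lambda>j. (y j::'a::ab_group_add) + z j) \<le> max (nrt_row_weight r y) (nrt_row_weight r z)"
proof -
  have a: "\<forall>j\<in>{1..r}. nrt_row_weight r y < j \<longrightarrow> y j = 0" using w_le[of r y "nrt_row_weight r y"] by simp
  have b: "\<forall>j\<in>{1..r}. nrt_row_weight r z < j \<longrightarrow> z j = 0" using w_le[of r z "nrt_row_weight r z"] by simp
  show ?thesis using a b by (simp add: w_le)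
qed

lemma w_zero_iff: "nrt_row_weight r y = 0 \<longleftrightarrow> (\<forall>j\<in>{1..r}. y j = 0)"
  using w_le[of r y 0] by auto

lemma w_0[simp]: "nrt_row_weight r (\<lambda>j. 0) = 0"
  by (simp add: nrt_row_weight_def)

lemma w_e1: "0 < r \<Longrightarrow> nrt_row_weight r (e1_row :: nat \<Rightarrow> 'a::zero_neq_one) = 1"
proof -
  assume r: "0 < r"
  have "nrt_row_weight r (e1_row :: nat \<Rightarrow> 'a) \<le> 1" by (simp add: w_le e1_row_def)
  moreover have "nrt_row_weight r (e1_row :: nat \<Rightarrow> 'a) \<noteq> 0"
    using r by (simp add: w_zero_iff e1_row_def)
  ultimately show ?thesis by linarith
qed

lemma w_neg: "nrt_row_weight r (\<lambda>j. - (y j::'a::ab_group_add)) = nrt_row_weight r y"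
  by (rule w_cong) simp

theorem mainTheorem8:
  fixes s r R :: nat
    and c :: "nat \<Rightarrow> nat \<Rightarrow> 'a::{field,finite}"
  assumes "0 < s" "0 < r" "0 < R" "2 \<le> s"
    and "int R - int r * (int s - int R - 1) \<le> 0"
    and "c \<in> mats s r"
    and "c \<in> nrt_ball s r (\<lambda>i j. if 1 \<le> i \<and> i \<le> R + 1 then e1_row j else 0) R"
    and "nrt_ball s r c R \<inter> nrt_ball s r (\<lambda>i j. 0) R = {}"
  shows "(\<forall>i\<in>{1..R+1}. \<forall>j. c i j = e1_row j) \<and> (\<Sum>i=R+2..s. nrt_row_weight r (c i)) = R"
proof -
  define m :: "nat \<Rightarrow> nat \<Rightarrow> 'a" where "m = (\<lambda>i j. if 1 \<le> i \<and> i \<le> R + 1 then e1_row j else 0)"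
  have sR: "R + 2 \<le> s"
  proof (rule ccontr)
    assume "\<not> R + 2 \<le> s"
    then have "int s - int R - 1 \<le> 0" by simp
    then have "int r * (int s - int R - 1) \<le> 0" using assms(2) by (simp add: mult_nonneg_nonpos)
    then show False using assms(3,5) by linarith
  qed
  have cz: "\<And>i j. i \<notin> {1..s} \<or> j \<notin> {1..r} \<Longrightarrow> c i j = 0" using assms(6) by (simp add: mats_def)
  have dist: "(\<Sum>i=1..s. nrt_row_weight r (\<lambda>j. c i j - m i j)) \<le> R"
    using assms(7) by (simp add: nrt_ball_def nrt_dist_def nrt_weight_def m_def)
  have noint: "\<And>x. x \<in> mats s r \<Longrightarrow> (\<Sum>i=1..s. nrt_row_weight r (\<lambda>j. x i j - c i j)) \<le> R
      \<Longrightarrow> (\<Sum>i=1..s. nrt_row_weight r (x i)) \<le> R \<Longrightarrow> False"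
    using assms(8) by (auto simp: nrt_ball_def nrt_dist_def nrt_weight_def)
  have split: "\<And>f::nat\<Rightarrow>nat. (\<Sum>i=1..s. f i) = (\<Sum>i=1..R+1. f i) + (\<Sum>i=R+2..s. f i)"
  proof -
    fix f :: "nat \<Rightarrow> nat"
    have "{1..s} = {1..R+1} \<union> {R+2..s}" using sR by auto
    then show "(\<Sum>i=1..s. f i) = (\<Sum>i=1..R+1. f i) + (\<Sum>i=R+2..s. f i)"
      by (simp add: sum.union_disjoint)
  qed
  define e where "e = (e1_row :: nat \<Rightarrow> 'a)"
  have we: "nrt_row_weight r e = 1" using w_e1 assms(2) e_def by blast
  have rows: "\<forall>i\<in>{1..R+1}. \<forall>j\<in>{1..r}. c i j = e j"
  proof (rule ccontr)
    assume "\<not> ?thesis"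
    then obtain i0 j0 where i0: "i0 \<in> {1..R+1}" "j0 \<in> {1..r}" "c i0 j0 \<noteq> e j0" by auto
    define J where "J = {i\<in>{1..R+1}. \<forall>j\<in>{1..r}. c i j = e j}"
    define x where "x = (\<lambda>i j. if i \<in> J then 0 else c i j)"
    have xm: "x \<in> mats s r" using cz by (auto simp: x_def mats_def)
    have wx: "\<And>i. i \<in> {1..s} \<Longrightarrow> nrt_row_weight r (x i) \<le> nrt_row_weight r (\<lambda>j. c i j - m i j)"
    proof -
      fix i assume i: "i \<in> {1..s}"
      show "nrt_row_weight r (x i) \<le> nrt_row_weight r (\<lambda>j. c i j - m i j)"
      proof (cases "i \<in> J")
        case True then show ?thesis by (simp add: x_def w_le)
      next
        case False
        show ?thesis
        proof (cases "i \<le> R + 1")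
          case True
          then have i1: "i \<in> {1..R+1}" using i by auto
          have mi: "m i = e" using i1 unfolding m_def e_def by (intro ext) simp
          have xi: "x i = c i" using False unfolding x_def by (intro ext) simp
          obtain j where j: "j \<in> {1..r}" "c i j \<noteq> e j" using False i1 unfolding J_def by blast
          have a1: "nrt_row_weight r (\<lambda>j. c i j - e j) \<noteq> 0" 
          proof
            assume "nrt_row_weight r (\<lambda>j. c i j - e j) = 0"
            then have "c i j - e j = 0" using j(1) w_zero_iff[of r "\<lambda>j. c i j - e j"] by blast
            then show False using j(2) by simp
          qed
          have "nrt_row_weight r (\<lambda>j. (c i j - e j) + e j) \<le> max (nrt_row_weight r (\<lambda>j. c i j - e j)) (nrt_row_weight r e)"
            by (rule w_ultra)
          then have "nrt_row_weight r (c i) \<le> max (nrt_row_weight r (\<lambda>j. c i j - e j)) 1"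
            using we by simp
          then show ?thesis using a1 xi mi by simp
        next
          case False
          then have "m i = (\<lambda>j. 0)" by (auto simp: m_def)
          then show ?thesis using \<open>i \<notin> J\<close> by (simp add: x_def)
        qed
      qed
    qed
    have "(\<Sum>i=1..s. nrt_row_weight r (x i)) \<le> (\<Sum>i=1..s. nrt_row_weight r (\<lambda>j. c i j - m i j))"
      by (rule sum_mono) (rule wx)
    then have s1: "(\<Sum>i=1..s. nrt_row_weight r (x i)) \<le> R" using dist by linarith
    have dx: "\<And>i. i \<in> {1..s} \<Longrightarrow> nrt_row_weight r (\<lambda>j. x i j - c i j) = (if i \<in> J then 1 else 0)"
    proof -
      fix i assume i: "i \<in> {1..s}"
      show "nrt_row_weight r (\<lambda>j. x i j - c i j) = (if i \<in> J then 1 else 0)"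
      proof (cases "i \<in> J")
        case True
        have "nrt_row_weight r (\<lambda>j. x i j - c i j) = nrt_row_weight r (c i)"
          using True by (simp add: x_def w_neg[of r "c i", simplified])
        also have "\<dots> = nrt_row_weight r e" using True by (intro w_cong) (auto simp: J_def)
        finally show ?thesis using True we by simp
      next
        case False then show ?thesis by (simp add: x_def w_le)
      qed
    qed
    have "(\<Sum>i=1..s. nrt_row_weight r (\<lambda>j. x i j - c i j)) = (\<Sum>i=1..s. (if i \<in> J then 1 else 0))"
      using dx by (rule sum.cong[OF refl])
    also have "\<dots> = card ({1..s} \<inter> J)" by (simp add: sum.If_cases)
    also have "\<dots> \<le> card ({1..R+1} - {i0})"
    proof (rule card_mono)
      show "{1..s} \<inter> J \<subseteq> {1..R + 1} - {i0}" using i0 by (auto simp: J_def)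
    qed simp
    also have "\<dots> = R" using i0 by simp
    finally show False using noint xm s1 by blast
  qed
  have rowsall: "\<forall>i\<in>{1..R+1}. \<forall>j. c i j = e1_row j"
  proof (intro ballI allI)
    fix i j assume i: "i \<in> {1..R+1}"
    show "c i j = e1_row j"
    proof (cases "j \<in> {1..r}")
      case True then show ?thesis using rows i e_def by auto
    next
      case False
      then have "j \<noteq> 1" using assms(2) by auto
      then show ?thesis using cz False by (simp add: e1_row_def)
    qed
  qed
  have d0: "\<And>i. i \<in> {1..R+1} \<Longrightarrow> nrt_row_weight r (\<lambda>j. c i j - m i j) = 0"
    using rowsall by (simp add: m_def w_le)
  have d1: "\<And>i. i \<in> {R+2..s} \<Longrightarrow> nrt_row_weight r (\<lambda>j. c i j - m i j) = nrt_row_weight r (c i)"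
    by (simp add: m_def)
  define B where "B = (\<Sum>i=R+2..s. nrt_row_weight r (c i))"
  have "(\<Sum>i=1..s. nrt_row_weight r (\<lambda>j. c i j - m i j)) = B"
    unfolding split B_def using d0 d1 by simp
  then have BR: "B \<le> R" using dist by simp
  have "B = R"
  proof (rule ccontr)
    assume "B \<noteq> R"
    then have BR': "B < R" using BR by simp
    define x where "x = (\<lambda>i j. if 2 \<le> i \<and> i \<le> R + 1 then 0 else c i j)"
    have xm: "x \<in> mats s r" using cz by (auto simp: x_def mats_def)
    have w1: "(\<Sum>i=1..s. nrt_row_weight r (x i)) = 1 + B"
    proof -
      have "(\<Sum>i=1..R+1. nrt_row_weight r (x i)) = (\<Sum>i=1..R+1. if i = 1 then 1 else 0)"
      proof (rule sum.cong[OF refl])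
        fix i assume i: "i \<in> {1..R+1}"
        show "nrt_row_weight r (x i) = (if i = 1 then 1 else 0)"
        proof (cases "i = 1")
          case True
          then have "x i = e" using rowsall i by (auto simp: x_def e_def)
          then show ?thesis using we True by simp
        next
          case False then show ?thesis using i by (simp add: x_def w_le)
        qed
      qed
      also have "\<dots> = 1" by simp
      finally show ?thesis unfolding split B_def by (simp add: x_def)
    qed
    have w2: "(\<Sum>i=1..s. nrt_row_weight r (\<lambda>j. x i j - c i j)) = R"
    proof -
      have "(\<Sum>i=1..R+1. nrt_row_weight r (\<lambda>j. x i j - c i j)) = (\<Sum>i=1..R+1. if i = 1 then 0 else 1)"
      proof (rule sum.cong[OF refl])
        fix i assume i: "i \<in> {1..R+1}"
        show "nrt_row_weight r (\<lambda>j. x i j - c i j) = (if i = 1 then 0 else 1)"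
        proof (cases "i = 1")
          case True then show ?thesis by (simp add: x_def w_le)
        next
          case False
          have h: "nrt_row_weight r (\<lambda>j. x i j - c i j) = nrt_row_weight r (c i)"
            using False i by (simp add: x_def w_neg[of r "c i", simplified])
          have "c i = e" using rowsall i by (auto simp: e_def)
          then have "nrt_row_weight r (c i) = 1" using we by simp
          then show ?thesis using h False by simp
        qed
      qed
      also have "\<dots> = R"
      proof -
        have "(\<Sum>i=1..R+1. (if i = 1 then 0 else 1::nat)) = (if (1::nat) = 1 then 0 else 1) + (\<Sum>i=Suc 1..R+1. (if i = 1 then 0 else 1::nat))"
          by (rule sum.atLeast_Suc_atMost) simp
        also have "(\<Sum>i=Suc 1..R+1. (if i = 1 then 0 else 1::nat)) = (\<Sum>i=Suc 1..R+1. 1)"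
          by (rule sum.cong) auto
        finally show ?thesis by simp
      qed
      finally show ?thesis unfolding split by (simp add: x_def w_le)
    qed
    show False using noint[OF xm] w1 w2 BR' by simp
  qed
  then show ?thesis using rowsall B_def by simp
qed

end
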